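(* Let $n,m,d$ be positive integers with $n=dm$ and $\gcd(d,m)=1$, and let $r,t\in\mathbb{Z}$ with $\gcd(r,n)=1$. Then \[\kappa(n,r,t)=\frac{|r|_n\,\kappa(d,r,t)\,\kappa(m,r,t)}{\gcd\left(\kappa(d,r,t),|r|_n\right)\gcd\left(\kappa(m,r,t),|r|_n\right)}.\] In particular, $\kappa(d,r,t)$ divides $\kappa(n,r,t)$.
   Context: For an integer $m\geq1$ and an integer $r$ with $\gcd(r,m)=1$, $|r|_m$ denotes the multiplicative order of $r$ modulo $m$ (so $|r|_1=1$). For $k\geq1$, $S_k(x):=1+x+\cdots+x^{k-1}$, and $S_0(x):=0$. For integers $n\geq1$, $r,t$ with $\gcd(r,n)=1$, $\kappa(n,r,t):=\dfrac{n\,|r|_n}{\gcd\left(n,\ t\,S_{|r|_n}(r)\right)}$. *)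

theory Defs
  imports "HOL-Number_Theory.Number_Theory"
begin

definition S :: "nat \<Rightarrow> int \<Rightarrow> int" where
  "S k x = (\<Sum>i<k. x ^ i)"

text \<open>kappa(n,r,t) = n |r|_n / gcd(n, t S_{|r|_n}(r)); |r|_n is the library's ord n r
  (multiplicative order, ord 1 r = 1). The division is exact since the gcd divides n.\<close>
definition kappa :: "int \<Rightarrow> int \<Rightarrow> int \<Rightarrow> int" where
  "kappa n r t = (n * int (ord n r)) div gcd n (t * S (ord n r) r)"

end

theory Submission
  imports Defs
begin

lemma ord_int:
  fixes N r :: int
  assumes N: "N > 0" and cop: "coprime N r"
  shows "ord N r > 0 \<and> [r ^ ord N r = 1] (mod N) \<and> (\<forall>k. [r^k = 1] (mod N) \<longleftrightarrow> ord N r dvd k)"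
proof -
  let ?P = "\<lambda>d::nat. d > 0 \<and> [r ^ d = 1] (mod N)"
  have ex: "\<exists>d. ?P d"
  proof (cases "N = 1")
    case True then show ?thesis by (intro exI[of _ 1]) auto
  next
    case False
    then have "residues N" using N by unfold_locales auto
    then have "[r ^ totient (nat N) = 1] (mod N)"
      using residues.euler_theorem cop by (metis coprime_commute)
    moreover have "totient (nat N) > 0" using N by simp
    ultimately show ?thesis by blast
  qed
  have o: "ord N r = (LEAST d. ?P d)" using cop by (simp add: ord_def)
  have P: "?P (ord N r)" unfolding o by (rule LeastI_ex[OF ex])
  have minim: "\<And>s. 0 < s \<Longrightarrow> s < ord N r \<Longrightarrow> \<not> [r ^ s = 1] (mod N)"
    unfolding o using not_less_Least by blast
  have "[r^k = 1] (mod N) \<longleftrightarrow> ord N r dvd k" for k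
  proof
    assume h: "[r^k = 1] (mod N)"
    define q s where "q = k div ord N r" and "s = k mod ord N r"
    have k: "k = ord N r * q + s" unfolding q_def s_def by simp
    have "r ^ k = (r ^ ord N r) ^ q * r ^ s" by (simp add: k power_add power_mult)
    moreover have "[(r ^ ord N r) ^ q * r ^ s = 1 ^ q * r ^ s] (mod N)"
      using P by (intro cong_mult cong_pow) auto
    ultimately have "[r ^ s = 1] (mod N)" using h
      by (metis cong_sym cong_trans power_one mult_1)
    moreover have "s < ord N r" using P unfolding s_def by simp
    ultimately have "s = 0" using minim by blast
    then show "ord N r dvd k" unfolding s_def by auto
  next
    assume "ord N r dvd k"
    then obtain q where "k = ord N r * q" by auto
    then have "r ^ k = (r ^ ord N r) ^ q" by (simp add: power_mult)
    moreover have "[(r ^ ord N r) ^ q = 1 ^ q] (mod N)" using P by (intro cong_pow) auto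
    ultimately show "[r^k = 1] (mod N)" by simp
  qed
  with P show ?thesis by blast
qed

lemma S_add: "S (a + b) x = S a x + x ^ a * S b x"
  by (induction b) (auto simp: S_def algebra_simps power_add)

lemma S_mult: "S (a * q) x = S a x * S q (x ^ a)"
proof (induction q)
  case 0 then show ?case by (simp add: S_def)
next
  case (Suc q)
  have "S (a * Suc q) x = S (a*q + a) x" by (simp add: algebra_simps)
  also have "\<dots> = S (a*q) x + x^(a*q) * S a x" by (rule S_add)
  also have "\<dots> = S a x * (S q (x ^ a) + (x^a)^q)" using Suc by (simp add: algebra_simps power_mult)
  also have "S q (x ^ a) + (x^a)^q = S (Suc q) (x ^ a)" by (simp add: S_def)
  finally show ?case .
qed

lemma S_cong: "[y = 1] (mod N) \<Longrightarrow> [S q y = int q] (mod N)"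
proof (induction q)
  case 0 then show ?case by (simp add: S_def)
next
  case (Suc q)
  have "S (Suc q) y = S q y + y ^ q" by (simp add: S_def)
  moreover have "[S q y + y ^ q = int q + 1 ^ q] (mod N)"
    using Suc by (intro cong_add cong_pow) auto
  ultimately show ?case by (simp add: add.commute)
qed

lemma kappa_char:
  fixes N r t :: int
  assumes N: "N > 0" and cop: "coprime N r"
  shows "\<exists>a. a > 0 \<and> a dvd N \<and> kappa N r t = int (ord N r) * a \<and>
     (\<forall>k. ([r^k = 1] (mod N) \<and> N dvd t * S k r) \<longleftrightarrow> kappa N r t dvd int k)"
proof -
  define o' where "o' = ord N r"
  have O: "o' > 0" "[r ^ o' = 1] (mod N)" "\<And>k. [r^k = 1] (mod N) \<longleftrightarrow> o' dvd k"
    using ord_int[OF N cop] unfolding o'_def by auto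
  define g where "g = gcd N (t * S o' r)"
  have g0: "g > 0" using N unfolding g_def by simp
  obtain a where a: "N = g * a" unfolding g_def by (meson gcd_dvd1 dvdE)
  obtain c where c: "t * S o' r = g * c" unfolding g_def by (meson gcd_dvd2 dvdE)
  have a0: "a > 0" using N g0 a by (simp add: zero_less_mult_iff)
  have "g = gcd (g*a) (g*c)" unfolding g_def by (subst a, subst c) (simp add: g_def[symmetric])
  also have "\<dots> = g * gcd a c" using g0 by (simp add: gcd_mult_left)
  finally have cop_ac: "coprime a c" using g0 by (simp add: coprime_iff_gcd_eq_1)
  have kap: "kappa N r t = int o' * a"
    unfolding kappa_def o'_def[symmetric] g_def[symmetric] using a g0 by simp
  have "([r^k = 1] (mod N) \<and> N dvd t * S k r) \<longleftrightarrow> int o' * a dvd int k" for k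
  proof
    assume h: "[r^k = 1] (mod N) \<and> N dvd t * S k r"
    then obtain q where q: "k = o' * q" using O by blast
    have "[t * S k r = t * S o' r * int q] (mod N)"
      unfolding q S_mult using S_cong[OF O(2), of q] by (simp add: mult.assoc cong_scalar_left)
    then have "N dvd t * S o' r * int q" using h by (metis cong_dvd_iff)
    then have "g * a dvd g * (c * int q)" using a c by (simp add: mult.assoc)
    then have "a dvd c * int q" using g0 by simp
    then have "a dvd int q" using cop_ac by (simp add: coprime_dvd_mult_right_iff)
    then show "int o' * a dvd int k" unfolding q by simp
  next
    assume h: "int o' * a dvd int k"
    then obtain j where j: "int k = int o' * a * j" by blast
    have "0 \<le> (int o' * a) * j" using j[symmetric] by simp
    moreover have "int o' * a > 0" using a0 O(1) by simp
    ultimately have j0: "j \<ge> 0" by (simp add: zero_le_mult_iff)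
    define q where "q = nat (a * j)"
    have "int k = int (o' * q)" unfolding q_def using j j0 a0 by (simp add: mult.assoc)
    then have q: "k = o' * q" by (simp only: of_nat_eq_iff)
    have "[t * S k r = t * S o' r * int q] (mod N)"
      unfolding q S_mult using S_cong[OF O(2), of q] by (simp add: mult.assoc cong_scalar_left)
    moreover have "t * S o' r * int q = N * (c * j)"
      unfolding q_def c a using a0 j0 by simp
    ultimately have "N dvd t * S k r" by (metis cong_dvd_iff dvd_triv_left)
    moreover have "[r^k = 1] (mod N)" using O q by simp
    ultimately show "[r^k = 1] (mod N) \<and> N dvd t * S k r" by simp
  qed
  then show ?thesis using kap a0 a unfolding o'_def by (intro exI[of _ a]) auto
qed

lemma gcd_prod:
  fixes X Y Z :: int
  assumes X: "X > 0" and Y: "Y > 0" and Z: "Z > 0" and h1: "Z dvd lcm X Y" and h2: "gcd X Y dvd Z"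
  shows "gcd X Z * gcd Y Z = Z * gcd X Y"
proof -
  have e1: "gcd X Z * gcd Y Z = gcd (X * gcd Y Z) (Z * gcd Y Z)"
    using Y Z by (simp add: gcd_mult_right abs_of_pos gcd.commute)
  have e2: "X * gcd Y Z = gcd (X*Y) (X*Z)" using X by (simp add: gcd_mult_left)
  have e3: "Z * gcd Y Z = gcd (Z*Y) (Z*Z)" using Z by (simp add: gcd_mult_left)
  have e4: "Z * gcd X Y = gcd (Z*X) (Z*Y)" using Z by (simp add: gcd_mult_left)
  let ?G = "gcd (gcd (X*Y) (X*Z)) (gcd (Z*Y) (Z*Z))"
  have "Z * gcd X Y dvd X * Y"
  proof -
    have "Z * gcd X Y dvd lcm X Y * gcd X Y" by (rule mult_dvd_mono[OF h1 dvd_refl])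
    then show ?thesis using X Y by simp
  qed
  moreover have "Z * gcd X Y dvd X * Z" by (simp add: mult.commute mult_dvd_mono)
  moreover have "Z * gcd X Y dvd Z * Y" by (simp add: mult_dvd_mono)
  moreover have "Z * gcd X Y dvd Z * Z" using h2 by (simp add: mult_dvd_mono)
  ultimately have d1: "Z * gcd X Y dvd ?G" by (intro gcd_greatest)
  have "?G dvd X * Z" by (meson gcd_dvd1 gcd_dvd2 dvd_trans)
  then have g1: "?G dvd Z * X" by (simp add: mult.commute)
  have g2: "?G dvd Z * Y" by (meson gcd_dvd1 gcd_dvd2 dvd_trans)
  have d2: "?G dvd Z * gcd X Y" unfolding e4 using g1 g2 by (rule gcd_greatest)
  have "?G = Z * gcd X Y"
    using d1 d2 Z by (intro zdvd_antisym_nonneg) auto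
  then show ?thesis using e1 e2 e3 by simp
qed

theorem lemma3p3:
  fixes n m d r t :: int
  assumes "n > 0" "m > 0" "d > 0" "n = d * m" "gcd d m = 1" "gcd r n = 1"
  shows "kappa n r t =
           (int (ord n r) * kappa d r t * kappa m r t) div
           (gcd (kappa d r t) (int (ord n r)) * gcd (kappa m r t) (int (ord n r)))
         \<and> kappa d r t dvd kappa n r t"
proof -
  have cdm: "coprime d m" using assms(5) by (simp add: coprime_iff_gcd_eq_1)
  have cn: "coprime n r" using assms(6) by (simp add: coprime_iff_gcd_eq_1 gcd.commute)
  have cd: "coprime d r" and cm: "coprime m r" using cn assms(4) by auto
  obtain an where an: "an > 0" "an dvd n" "kappa n r t = int (ord n r) * an"
     "\<And>k. ([r^k = 1] (mod n) \<and> n dvd t * S k r) \<longleftrightarrow> kappa n r t dvd int k"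
    using kappa_char[OF assms(1) cn, of t] by blast
  obtain ad where ad: "ad > 0" "ad dvd d" "kappa d r t = int (ord d r) * ad"
     "\<And>k. ([r^k = 1] (mod d) \<and> d dvd t * S k r) \<longleftrightarrow> kappa d r t dvd int k"
    using kappa_char[OF assms(3) cd, of t] by blast
  obtain am where am: "am > 0" "am dvd m" "kappa m r t = int (ord m r) * am"
     "\<And>k. ([r^k = 1] (mod m) \<and> m dvd t * S k r) \<longleftrightarrow> kappa m r t dvd int k"
    using kappa_char[OF assms(2) cm, of t] by blast
  have On: "ord n r > 0" "\<And>k. [r^k = 1] (mod n) \<longleftrightarrow> ord n r dvd k"
    using ord_int[OF assms(1) cn] by auto
  have Od: "ord d r > 0" "\<And>k. [r^k = 1] (mod d) \<longleftrightarrow> ord d r dvd k"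
    using ord_int[OF assms(3) cd] by auto
  have Om: "ord m r > 0" "\<And>k. [r^k = 1] (mod m) \<longleftrightarrow> ord m r dvd k"
    using ord_int[OF assms(2) cm] by auto
  have congsplit: "[x = 1] (mod n) \<longleftrightarrow> [x = 1] (mod d) \<and> [x = 1] (mod m)" for x
    using assms(4) cdm
    by (metis coprime_cong_mult cong_modulus_mult mult.commute)
  have dvdsplit: "n dvd y \<longleftrightarrow> d dvd y \<and> m dvd y" for y
    using assms(4) cdm by (metis divides_mult dvd_mult_left dvd_mult_right)
  have Kiff: "kappa n r t dvd int k \<longleftrightarrow> kappa d r t dvd int k \<and> kappa m r t dvd int k" for k
    using an(4)[of k] ad(4)[of k] am(4)[of k] congsplit dvdsplit by blast
  define Kn where "Kn = kappa n r t"
  define Kd where "Kd = kappa d r t"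
  define Km where "Km = kappa m r t"
  have Kn0: "Kn > 0" unfolding Kn_def an(3) using an On by simp
  have Kd0: "Kd > 0" unfolding Kd_def ad(3) using ad Od by simp
  have Km0: "Km > 0" unfolding Km_def am(3) using am Om by simp
  have "Kd dvd Kn \<and> Km dvd Kn" using Kiff[of "nat Kn"] Kn0 unfolding Kn_def Kd_def Km_def by simp
  then have l1: "lcm Kd Km dvd Kn" by simp
  have "lcm Kd Km > 0" using Kd0 Km0 by (simp add: lcm_pos_int)
  then have "Kn dvd lcm Kd Km" using Kiff[of "nat (lcm Kd Km)"] unfolding Kn_def Kd_def Km_def by simp
  then have Kn: "Kn = lcm Kd Km" using l1 Kn0 by (intro zdvd_antisym_nonneg) auto
  have ordn: "ord n r = lcm (ord d r) (ord m r)"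
  proof (rule dvd_antisym)
    show "ord n r dvd lcm (ord d r) (ord m r)"
      using On(2) Od(2) Om(2) congsplit by (meson dvd_lcm1 dvd_lcm2)
    show "lcm (ord d r) (ord m r) dvd ord n r"
      using On(2) Od(2) Om(2) congsplit by (meson dvd_refl lcm_least)
  qed
  define Z where "Z = int (ord n r)"
  have Z0: "Z > 0" unfolding Z_def using On by simp
  have Zl: "Z = lcm (int (ord d r)) (int (ord m r))" unfolding Z_def ordn by simp
  have h1: "Z dvd lcm Kd Km" unfolding Zl Kd_def Km_def ad(3) am(3)
    by (intro lcm_mono) simp_all
  have "gcd ad am = 1"
  proof -
    have "gcd ad am dvd gcd d m" using ad(2) am(2) by (meson gcd_mono)
    then show ?thesis using assms(5) ad am
      by (metis gcd_pos_int zdvd_imp_le order.antisym linorder_not_le zero_less_one int_one_le_iff_zero_less)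
  qed
  have h2: "gcd Kd Km dvd Z"
  proof -
    have "gcd Kd Km dvd Z * ad" unfolding Kd_def ad(3) Zl
      by (meson dvd_lcm1 dvd_trans gcd_dvd1 mult_dvd_mono dvd_refl)
    moreover have "gcd Kd Km dvd Z * am" unfolding Km_def am(3) Zl
      by (meson dvd_lcm2 dvd_trans gcd_dvd2 mult_dvd_mono dvd_refl)
    ultimately have "gcd Kd Km dvd gcd (Z*ad) (Z*am)" by (rule gcd_greatest)
    also have "gcd (Z*ad) (Z*am) = Z" using Z0 \<open>gcd ad am = 1\<close> by (simp add: gcd_mult_left)
    finally show ?thesis .
  qed
  have gp: "gcd Kd Z * gcd Km Z = Z * gcd Kd Km" by (rule gcd_prod[OF Kd0 Km0 Z0 h1 h2])
  have g0: "gcd Kd Km > 0" using Kd0 by simp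
  have "Z * Kd * Km div (Z * gcd Kd Km) = Kd * Km div gcd Kd Km"
    using Z0 by (metis mult.assoc div_mult_mult1 less_irrefl)
  also have "\<dots> = lcm Kd Km" using Kd0 Km0
    by (simp add: lcm_gcd abs_of_nonneg pos_imp_zdiv_nonneg_iff)
  finally have "Kn = Z * Kd * Km div (gcd Kd Z * gcd Km Z)" using Kn gp by simp
  then show ?thesis unfolding Kn_def Kd_def Km_def Z_def using Kn \<open>Kd dvd Kn \<and> Km dvd Kn\<close>
    unfolding Kn_def Kd_def Km_def by simp
qed

end
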